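(* Let $L,T>0$, $0<\gamma<1$, $\alpha>0$, let $K\ge1$ be an integer, $\Delta t=T/K$, $t_p=p\Delta t$, $\beta=\Gamma(2-\gamma)\Delta t^{\gamma}$ and $b_j=(j+1)^{1-\gamma}-j^{1-\gamma}$. Let $y(x,t)$ be the exact solution of $$\frac{\partial^{\gamma}y}{\partial t^{\gamma}}+\alpha\frac{\partial^4 y}{\partial x^4}=u(x,t),\quad (x,t)\in[0,L]\times[0,T],$$ with $y(x,0)=v_0(x)$, $y(0,t)=y(L,t)=0$, $y_{xx}(0,t)=y_{xx}(L,t)=0$, where $\partial_t^\gamma$ is the Caputo derivative, and assume $y$ is smooth enough that the L1 approximation satisfies $|l^{p}_{\Delta t}(x)|\le c\,\Delta t^{2-\gamma}$ for all $x\in[0,L]$ and $p=1,\dots,K$, with $c$ depending only on $y$, where $l^{p}_{\Delta t}(x)=\frac{\partial^\gamma y}{\partial t^\gamma}(x,t_p)-\frac{1}{\Gamma(2-\gamma)}\sum_{j=0}^{p-1}b_j\frac{y(x,t_{p-j})-y(x,t_{p-j-1})}{\Delta t^{\gamma}}$. Let $\{y^p\}_{p=0}^{K}$ be the time-discrete solution: $y^0=v_0$ and, for $p=1,\dots,K$, $y^p\in H^4(0,L)$ with $y^p(0)=y^p(L)=0$, $y^p_{xx}(0)=y^p_{xx}(L)=0$ and $$y^{1}+\beta\alpha\,y^{1}_{xxxx}=y^0+\beta u(\cdot,t_1),$$ $$y^{p+1}+\beta\alpha\,y^{p+1}_{xxxx}=(1-b_1)y^{p}+\sum_{j=1}^{p-1}(b_j-b_{j+1})y^{p-j}+b_p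 y^{0}+\beta u(\cdot,t_{p+1}),\quad p=1,\dots,K-1.$$ Then there is a constant $c_{y,\gamma}$ depending only on $y$ and $\gamma$ such that $$\|y(\cdot,t_p)-y^{p}\|_{2}\le c_{y,\gamma}\,T^{\gamma}\,\Delta t^{2-\gamma},\qquad p=1,2,\dots,K.$$
   Context: The Caputo derivative of order $\gamma\in(0,1)$ is $\frac{\partial^\gamma y}{\partial t^\gamma}(x,t)=\frac{1}{\Gamma(1-\gamma)}\int_0^t \frac{\partial y(x,s)}{\partial s}(t-s)^{-\gamma}ds$. $\|g\|_0$ is the $L^2(0,L)$ norm and $\|g\|_2=\big(\|g\|_0^2+\beta\alpha\|g_{xx}\|_0^2\big)^{1/2}$. Empty sums are zero. *)

theory Defs
  imports "HOL-Analysis.Analysis"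
begin

definition dxk :: "nat \<Rightarrow> (real \<Rightarrow> real \<Rightarrow> real) \<Rightarrow> real \<Rightarrow> real \<Rightarrow> real" where
  "dxk k y t = (deriv ^^ k) (\<lambda>x. y x t)"

definition caputo :: "real \<Rightarrow> (real \<Rightarrow> real \<Rightarrow> real) \<Rightarrow> real \<Rightarrow> real \<Rightarrow> real" where
  "caputo \<gamma> y x t = (1 / Gamma (1 - \<gamma>)) *
     integral {0..t} (\<lambda>s. deriv (\<lambda>r. y x r) s * (t - s) powr (- \<gamma>))"

definition bcoef :: "real \<Rightarrow> nat \<Rightarrow> real" where
  "bcoef \<gamma> j = (real j + 1) powr (1 - \<gamma>) - real j powr (1 - \<gamma>)"

definition l1_resid :: "real \<Rightarrow> real \<Rightarrow> nat \<Rightarrow> (real \<Rightarrow> real \<Rightarrow> real) \<Rightarrow> real \<Rightarrow> nat \<Rightarrow> real" where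
  "l1_resid \<gamma> T K y x p =
     caputo \<gamma> y x (real p * (T / real K))
     - (1 / Gamma (2 - \<gamma>)) *
       (\<Sum>j<p. bcoef \<gamma> j * (y x (real (p - j) * (T / real K)) - y x (real (p - j - 1) * (T / real K)))
                 / (T / real K) powr \<gamma>)"

definition norm0 :: "real \<Rightarrow> (real \<Rightarrow> real) \<Rightarrow> real" where
  "norm0 L g = sqrt (integral {0..L} (\<lambda>x. (g x)\<^sup>2))"

text \<open>The norm ||g||_2 = (||g||_0^2 + beta alpha ||g_xx||_0^2)^(1/2); gxx is the second derivative of g.\<close>
definition norm2 :: "real \<Rightarrow> real \<Rightarrow> real \<Rightarrow> (real \<Rightarrow> real) \<Rightarrow> (real \<Rightarrow> real) \<Rightarrow> real" where
  "norm2 L \<beta> \<alpha> g gxx = sqrt ((norm0 L g)\<^sup>2 + \<beta> * \<alpha> * (norm0 L gxx)\<^sup>2)"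

text \<open>Membership in H^4(0,L), with D k the k-th (weak) derivative of f:
  D 0 = f on [0,L], D k is the integral of D (k+1) for k < 4, and D 4 is in L^2(0,L).\<close>
definition H4 :: "real \<Rightarrow> (real \<Rightarrow> real) \<Rightarrow> (nat \<Rightarrow> real \<Rightarrow> real) \<Rightarrow> bool" where
  "H4 L f D \<longleftrightarrow>
     (\<forall>x\<in>{0..L}. D 0 x = f x) \<and>
     (\<forall>k<4. \<forall>x\<in>{0..L}. D k x = D k 0 + integral {0..x} (D (Suc k))) \<and>
     D 4 absolutely_integrable_on {0..L} \<and>
     (\<lambda>x. (D 4 x)\<^sup>2) integrable_on {0..L}"

text \<open>Time-discrete solution {y^p}_{p=0..K} (ys p = y^p, Ds p k = k-th x-derivative of y^p).
  beta = Gamma(2-gamma) Delta t^gamma.  Equations hold a.e. in (0,L).\<close>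
definition discrete_solution ::
  "real \<Rightarrow> real \<Rightarrow> real \<Rightarrow> real \<Rightarrow> (real \<Rightarrow> real \<Rightarrow> real) \<Rightarrow> (real \<Rightarrow> real) \<Rightarrow> nat
   \<Rightarrow> (nat \<Rightarrow> real \<Rightarrow> real) \<Rightarrow> (nat \<Rightarrow> nat \<Rightarrow> real \<Rightarrow> real) \<Rightarrow> bool" where
  "discrete_solution L T \<gamma> \<alpha> u v0 K ys Ds \<longleftrightarrow>
     (let dt = T / real K; \<beta> = Gamma (2 - \<gamma>) * dt powr \<gamma> in
      (\<forall>x\<in>{0..L}. ys 0 x = v0 x) \<and>
      (\<forall>p\<in>{1..K}. H4 L (ys p) (Ds p) \<and> ys p 0 = 0 \<and> ys p L = 0 \<and>
                   Ds p 2 0 = 0 \<and> Ds p 2 L = 0) \<and>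
      (\<exists>N. negligible N \<and> (\<forall>x\<in>{0..L} - N.
          ys 1 x + \<beta> * \<alpha> * Ds 1 4 x = ys 0 x + \<beta> * u x dt)) \<and>
      (\<forall>p\<in>{1..K - 1}. \<exists>N. negligible N \<and> (\<forall>x\<in>{0..L} - N.
          ys (p + 1) x + \<beta> * \<alpha> * Ds (p + 1) 4 x =
            (1 - bcoef \<gamma> 1) * ys p x
            + (\<Sum>j\<in>{1..p - 1}. (bcoef \<gamma> j - bcoef \<gamma> (j + 1)) * ys (p - j) x)
            + bcoef \<gamma> p * ys 0 x + \<beta> * u x (real (p + 1) * dt))))"

end

theory Submission
  imports Defs
begin

lemma int_cmul: "f integrable_on S \<Longrightarrow> (\<lambda>x. (c::real) * f x) integrable_on S"
  using integrable_on_cmult_left[of f S c] by simp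

lemma ibp_incr:
  fixes F f g g' :: "real \<Rightarrow> real"
  assumes st: "a \<le> s" "s \<le> t" "t \<le> b"
    and fint: "f integrable_on {a..b}"
    and Frep: "\<forall>x\<in>{a..b}. F x = F a + integral {a..x} f"
    and gd: "\<forall>x\<in>{a..b}. (g has_real_derivative g' x) (at x within {a..b})"
    and g'c: "continuous_on {a..b} g'"
    and fgint: "(\<lambda>x. f x * g x) integrable_on {a..b}"
    and Fg'int: "(\<lambda>x. F x * g' x) integrable_on {a..b}"
  shows "(integral {a..t} (\<lambda>x. f x * g x) - F t * g t + integral {a..t} (\<lambda>x. F x * g' x))
       - (integral {a..s} (\<lambda>x. f x * g x) - F s * g s + integral {a..s} (\<lambda>x. F x * g' x))
       = integral {s..t} (\<lambda>x. f x * (g x - g s)) + integral {s..t} (\<lambda>x. (F x - F t) * g' x)"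
proof -
  have sub: "{s..t} \<subseteq> {a..b}" using st by auto
  have fi: "f integrable_on {s..t}" by (rule integrable_on_subinterval[OF fint sub])
  have fgi: "(\<lambda>x. f x * g x) integrable_on {s..t}" by (rule integrable_on_subinterval[OF fgint sub])
  have Fgi: "(\<lambda>x. F x * g' x) integrable_on {s..t}" by (rule integrable_on_subinterval[OF Fg'int sub])
  have g'i: "g' integrable_on {s..t}"
    by (rule integrable_continuous_real) (rule continuous_on_subset[OF g'c sub])
  have comb: "integral {a..t} h = integral {a..s} h + integral {s..t} h" if "h integrable_on {a..b}" for h :: "real \<Rightarrow> real"
  proof -
    have "h integrable_on {a..t}" by (rule integrable_on_subinterval[OF that]) (use st in auto)
    then show ?thesis using Henstock_Kurzweil_Integration.integral_combine[where a=a and c=s and b=t and f=h] st by simp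
  qed
  have c1: "integral {a..t} (\<lambda>x. f x * g x) = integral {a..s} (\<lambda>x. f x * g x) + integral {s..t} (\<lambda>x. f x * g x)"
    by (rule comb) (fact fgint)
  have c2: "integral {a..t} (\<lambda>x. F x * g' x) = integral {a..s} (\<lambda>x. F x * g' x) + integral {s..t} (\<lambda>x. F x * g' x)"
    by (rule comb) (fact Fg'int)
  have c3: "integral {a..t} f = integral {a..s} f + integral {s..t} f"
    by (rule comb) (fact fint)
  have Ft: "F t = F a + integral {a..t} f" by (rule Frep[rule_format]) (use st in auto)
  have Fs: "F s = F a + integral {a..s} f" by (rule Frep[rule_format]) (use st in auto)
  have Fst: "F t - F s = integral {s..t} f" unfolding Ft Fs c3 by simp
  have gst: "integral {s..t} g' = g t - g s"
  proof -
    have "(g' has_integral (g t - g s)) {s..t}"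
    proof (rule fundamental_theorem_of_calculus[OF st(2)])
      fix x assume x: "x \<in> {s..t}"
      then have "(g has_real_derivative g' x) (at x within {a..b})" using gd sub by blast
      then have "(g has_real_derivative g' x) (at x within {s..t})" by (rule has_field_derivative_subset[OF _ sub])
      then show "(g has_vector_derivative g' x) (at x within {s..t})"
        by (simp add: has_real_derivative_iff_has_vector_derivative)
    qed
    then show ?thesis by (simp add: integral_unique)
  qed
  have i1: "integral {s..t} (\<lambda>x. f x * (g x - g s)) = integral {s..t} (\<lambda>x. f x * g x) - g s * integral {s..t} f"
  proof -
    have "integral {s..t} (\<lambda>x. f x * (g x - g s)) = integral {s..t} (\<lambda>x. f x * g x - g s * f x)"
      by (rule integral_cong) (simp add: algebra_simps)
    also have "\<dots> = integral {s..t} (\<lambda>x. f x * g x) - integral {s..t} (\<lambda>x. g s * f x)"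
      by (rule Henstock_Kurzweil_Integration.integral_diff[OF fgi int_cmul[OF fi]])
    finally show ?thesis by simp
  qed
  have i2: "integral {s..t} (\<lambda>x. (F x - F t) * g' x) = integral {s..t} (\<lambda>x. F x * g' x) - F t * integral {s..t} g'"
  proof -
    have "integral {s..t} (\<lambda>x. (F x - F t) * g' x) = integral {s..t} (\<lambda>x. F x * g' x - F t * g' x)"
      by (rule integral_cong) (simp add: algebra_simps)
    also have "\<dots> = integral {s..t} (\<lambda>x. F x * g' x) - integral {s..t} (\<lambda>x. F t * g' x)"
      by (rule Henstock_Kurzweil_Integration.integral_diff[OF Fgi int_cmul[OF g'i]])
    finally show ?thesis by simp
  qed
  show ?thesis unfolding c1 c2 i1 i2 gst Fst[symmetric] by (simp add: algebra_simps)
qed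


lemma int_split:
  fixes h :: "real \<Rightarrow> real"
  assumes "h integrable_on {a..b}" "a \<le> s" "s \<le> t" "t \<le> b"
  shows "integral {s..t} h = integral {a..t} h - integral {a..s} h"
proof -
  have "h integrable_on {a..t}" by (rule integrable_on_subinterval[OF assms(1)]) (use assms in auto)
  then show ?thesis using Henstock_Kurzweil_Integration.integral_combine[where a=a and c=s and b=t and f=h] assms by simp
qed

lemma abs_int_prod:
  fixes f g :: "real \<Rightarrow> real"
  assumes "f absolutely_integrable_on {a..b}" "continuous_on {a..b} g"
  shows "(\<lambda>x. g x * f x) absolutely_integrable_on {a..b}"
proof (rule absolutely_integrable_bounded_measurable_product_real)
  show "g \<in> borel_measurable (lebesgue_on {a..b})"
    by (rule continuous_imp_measurable_on_sets_lebesgue[OF assms(2)]) auto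
  show "bounded (g ` {a..b})"
    by (rule compact_imp_bounded, rule compact_continuous_image[OF assms(2)]) auto
qed (use assms in auto)

lemma int_prod:
  fixes f g :: "real \<Rightarrow> real"
  assumes "f absolutely_integrable_on {a..b}" "continuous_on {a..b} g"
  shows "(\<lambda>x. f x * g x) integrable_on {a..b}"
proof -
  have "(\<lambda>x. g x * f x) absolutely_integrable_on {a..b}" by (rule abs_int_prod[OF assms])
  then have "(\<lambda>x. g x * f x) integrable_on {a..b}" unfolding absolutely_integrable_on_def by blast
  then show ?thesis by (simp only: mult.commute)
qed

lemma small_zero:
  fixes z K :: real
  assumes "K \<ge> 0" "\<And>e. e > 0 \<Longrightarrow> \<bar>z\<bar> \<le> e * K"
  shows "z = 0"
proof (rule ccontr)
  assume "z \<noteq> 0"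
  define e where "e = \<bar>z\<bar> / (2 * (K + 1))"
  have e: "e > 0" using \<open>z \<noteq> 0\<close> assms(1) by (simp add: e_def)
  have "e * K < \<bar>z\<bar>"
  proof -
    have "e * K \<le> e * (K + 1)" using e by simp
    also have "\<dots> = \<bar>z\<bar> / 2" using assms(1) by (simp add: e_def field_simps)
    also have "\<dots> < \<bar>z\<bar>" using \<open>z \<noteq> 0\<close> by simp
    finally show ?thesis .
  qed
  with assms(2)[OF e] show False by simp
qed


lemma ibp_gen:
  fixes F f g g' :: "real \<Rightarrow> real"
  assumes ab: "a \<le> b"
    and fabs: "f absolutely_integrable_on {a..b}"
    and Frep: "\<forall>x\<in>{a..b}. F x = F a + integral {a..x} f"
    and gd: "\<forall>x\<in>{a..b}. (g has_real_derivative g' x) (at x within {a..b})"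
    and g'c: "continuous_on {a..b} g'"
  shows "integral {a..b} (\<lambda>x. f x * g x) = F b * g b - F a * g a - integral {a..b} (\<lambda>x. F x * g' x)"
proof -
  have fint: "f integrable_on {a..b}" using fabs absolutely_integrable_on_def by blast
  have afint: "(\<lambda>x. \<bar>f x\<bar>) integrable_on {a..b}" using fabs unfolding absolutely_integrable_on_def real_norm_def by blast
  have gc: "continuous_on {a..b} g" by (rule DERIV_continuous_on[where D=g']) (use gd in blast)
  have Fc: "continuous_on {a..b} F"
  proof -
    have "continuous_on {a..b} (\<lambda>x. F a + integral {a..x} f)"
      by (intro continuous_intros indefinite_integral_continuous_1 fint)
    then show ?thesis by (rule continuous_on_eq) (simp add: Frep[rule_format, symmetric])
  qed
  have fgint: "(\<lambda>x. f x * g x) integrable_on {a..b}"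
    by (rule int_prod[OF fabs gc])
  have Fg'c: "continuous_on {a..b} (\<lambda>x. F x * g' x)" by (intro continuous_intros Fc g'c)
  have Fg'int: "(\<lambda>x. F x * g' x) integrable_on {a..b}"
    by (rule integrable_continuous_real[OF Fg'c])
  obtain M where M: "M \<ge> 0" "\<And>x. x \<in> {a..b} \<Longrightarrow> \<bar>g' x\<bar> \<le> M"
  proof -
    have "bounded (g' ` {a..b})"
      by (rule compact_imp_bounded, rule compact_continuous_image[OF g'c]) auto
    then obtain B where "B > 0" "\<And>x. x \<in> {a..b} \<Longrightarrow> norm (g' x) \<le> B"
      by (auto simp: bounded_pos)
    then show ?thesis using that[of B] by auto
  qed
  define A where "A t = integral {a..t} (\<lambda>x. \<bar>f x\<bar>)" for t
  define \<Phi> where "\<Phi> t = integral {a..t} (\<lambda>x. f x * g x) - F t * g t + integral {a..t} (\<lambda>x. F x * g' x)" for t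
  have Aa: "A a = 0" by (simp add: A_def)
  have A_nonneg: "A b \<ge> 0" unfolding A_def by (rule integral_nonneg[OF afint]) auto
  have main: "\<bar>\<Phi> b - \<Phi> a\<bar> \<le> e * (A b + M * (b - a))" if e: "e > 0" for e
  proof -
    have "uniformly_continuous_on {a..b} g" by (rule compact_uniformly_continuous[OF gc]) auto
    then obtain d1 where d1: "d1 > 0" "\<And>x x'. x \<in> {a..b} \<Longrightarrow> x' \<in> {a..b} \<Longrightarrow> dist x' x < d1 \<Longrightarrow> dist (g x') (g x) < e"
      using e unfolding uniformly_continuous_on_def by metis
    have "uniformly_continuous_on {a..b} F" by (rule compact_uniformly_continuous[OF Fc]) auto
    then obtain d2 where d2: "d2 > 0" "\<And>x x'. x \<in> {a..b} \<Longrightarrow> x' \<in> {a..b} \<Longrightarrow> dist x' x < d2 \<Longrightarrow> dist (F x') (F x) < e"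
      using e unfolding uniformly_continuous_on_def by metis
    define d where "d = min d1 d2"
    have d: "d > 0" using d1 d2 by (simp add: d_def)
    obtain n :: nat where n: "real n > (b - a) / d" using reals_Archimedean2 by blast
    have "(b - a) / d \<ge> 0" using ab d by simp
    then have "real n > 0" using n by linarith
    then have npos: "n > 0" by simp
    define h where "h = (b - a) / real n"
    have h0: "h \<ge> 0" using ab npos by (simp add: h_def)
    have hd: "h < d"
    proof -
      have "b - a < real n * d" using n d by (simp add: field_simps)
      then show ?thesis using npos d by (simp add: h_def field_simps)
    qed
    define x where "x k = a + real k * h" for k
    have xn: "x n = b" using npos by (simp add: x_def h_def)
    have x0: "x 0 = a" by (simp add: x_def)
    have xin: "a \<le> x k \<and> x k \<le> b" if "k \<le> n" for k
    proof -
      have "real k * h \<le> real n * h" using that h0 by (simp add: mult_right_mono)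
      also have "real n * h = b - a" using npos by (simp add: h_def)
      finally show ?thesis using h0 by (simp add: x_def)
    qed
    have xs: "x (Suc k) = x k + h" for k by (simp add: x_def algebra_simps)
    have step: "\<bar>\<Phi> (x (Suc k)) - \<Phi> (x k)\<bar> \<le> e * (A (x (Suc k)) - A (x k)) + e * M * h" if k: "k < n" for k
    proof -
      define s where "s = x k"
      define t where "t = x (Suc k)"
      have st: "a \<le> s" "s \<le> t" "t \<le> b" using xin[of k] xin[of "Suc k"] k h0 by (auto simp: s_def t_def xs)
      have ts: "t - s = h" by (simp add: s_def t_def xs)
      have sub: "{s..t} \<subseteq> {a..b}" using st by auto
      have eq: "\<Phi> t - \<Phi> s = integral {s..t} (\<lambda>x. f x * (g x - g s)) + integral {s..t} (\<lambda>x. (F x - F t) * g' x)"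
        unfolding \<Phi>_def by (rule ibp_incr[OF st fint Frep gd g'c fgint Fg'int])
      have b1: "\<bar>integral {s..t} (\<lambda>x. f x * (g x - g s))\<bar> \<le> e * (A t - A s)"
      proof -
        have fabs': "f absolutely_integrable_on {s..t}" by (rule absolutely_integrable_on_subinterval[OF fabs sub])
        have gsc: "continuous_on {s..t} (\<lambda>x. g x - g s)"
          by (intro continuous_intros continuous_on_subset[OF gc sub])
        have i1: "(\<lambda>x. f x * (g x - g s)) integrable_on {s..t}"
          by (rule int_prod[OF fabs' gsc])
        have i2: "(\<lambda>x. e * \<bar>f x\<bar>) integrable_on {s..t}"
          using int_cmul[OF integrable_on_subinterval[OF afint sub]] .
        have "norm (integral {s..t} (\<lambda>x. f x * (g x - g s))) \<le> integral {s..t} (\<lambda>x. e * \<bar>f x\<bar>)"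
        proof (rule integral_norm_bound_integral[OF i1 i2])
          fix y assume y: "y \<in> {s..t}"
          have "dist y s < d1" using y ts hd by (simp add: dist_real_def d_def)
          then have "dist (g y) (g s) < e" using d1(2)[of s y] st y by auto
          then have "\<bar>g y - g s\<bar> \<le> e" by (simp add: dist_real_def)
          then have "\<bar>f y\<bar> * \<bar>g y - g s\<bar> \<le> \<bar>f y\<bar> * e" by (simp add: mult_left_mono)
          then show "norm (f y * (g y - g s)) \<le> e * \<bar>f y\<bar>"
            by (simp add: abs_mult mult.commute)
        qed
        also have "\<dots> = e * integral {s..t} (\<lambda>x. \<bar>f x\<bar>)" by simp
        also have "integral {s..t} (\<lambda>x. \<bar>f x\<bar>) = A t - A s"
          unfolding A_def by (rule int_split[OF afint st])
        finally show ?thesis by simp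
      qed
      have b2: "\<bar>integral {s..t} (\<lambda>x. (F x - F t) * g' x)\<bar> \<le> e * M * h"
      proof -
        have i1: "(\<lambda>x. (F x - F t) * g' x) integrable_on {s..t}"
          by (rule integrable_continuous_real)
            (intro continuous_intros continuous_on_subset[OF Fc sub] continuous_on_subset[OF g'c sub])
        have "norm (integral {s..t} (\<lambda>x. (F x - F t) * g' x)) \<le> integral {s..t} (\<lambda>x. e * M)"
        proof (rule integral_norm_bound_integral[OF i1])
          show "(\<lambda>x. e * M) integrable_on {s..t}" by (rule integrable_const_ivl)
          fix y assume y: "y \<in> {s..t}"
          have "dist y t < d2" using y ts hd by (simp add: dist_real_def d_def)
          then have "dist (F y) (F t) < e" using d2(2)[of t y] st y by auto
          then have "\<bar>F y - F t\<bar> \<le> e" by (simp add: dist_real_def)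
          moreover have "\<bar>g' y\<bar> \<le> M" using M(2) y sub by auto
          ultimately show "norm ((F y - F t) * g' y) \<le> e * M"
            by (simp add: abs_mult mult_mono)
        qed
        also have "\<dots> = e * M * h" using st ts by simp
        finally show ?thesis by simp
      qed
      show ?thesis using eq b1 b2 unfolding s_def[symmetric] t_def[symmetric] by linarith
    qed
    have "(\<Sum>k<n. \<Phi> (x (Suc k)) - \<Phi> (x k)) = \<Phi> (x n) - \<Phi> (x 0)" by (rule sum_lessThan_telescope)
    then have "\<Phi> b - \<Phi> a = (\<Sum>k<n. \<Phi> (x (Suc k)) - \<Phi> (x k))" by (simp add: xn x0)
    then have "\<bar>\<Phi> b - \<Phi> a\<bar> \<le> (\<Sum>k<n. \<bar>\<Phi> (x (Suc k)) - \<Phi> (x k)\<bar>)"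
      by (simp add: sum_abs)
    also have "\<dots> \<le> (\<Sum>k<n. e * (A (x (Suc k)) - A (x k)) + e * M * h)"
      by (rule sum_mono) (use step in auto)
    also have "\<dots> = e * (\<Sum>k<n. A (x (Suc k)) - A (x k)) + real n * (e * M * h)"
      by (simp add: sum.distrib sum_distrib_left)
    also have "(\<Sum>k<n. A (x (Suc k)) - A (x k)) = A b"
      using sum_lessThan_telescope[of "\<lambda>k. A (x k)" n] by (simp add: xn x0 Aa)
    also have "real n * (e * M * h) = e * M * (b - a)" using npos by (simp add: h_def)
    finally show ?thesis by (simp add: algebra_simps)
  qed
  have "\<Phi> b - \<Phi> a = 0"
    by (rule small_zero[of "A b + M * (b - a)"]) (use A_nonneg M ab main in auto)
  then show ?thesis by (simp add: \<Phi>_def algebra_simps)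
qed


lemma disc_lemma:
  fixes A B C :: real
  assumes C: "C \<ge> 0" and h: "\<And>t. 0 \<le> A - 2 * t * B + t\<^sup>2 * C"
  shows "B\<^sup>2 \<le> A * C"
proof (cases "C > 0")
  case True
  have "0 \<le> A - 2 * (B / C) * B + (B / C)\<^sup>2 * C" by (rule h)
  also have "\<dots> = A - B\<^sup>2 / C" using True by (simp add: field_simps power2_eq_square)
  finally have "B\<^sup>2 / C \<le> A" by simp
  then show ?thesis using True by (simp add: field_simps)
next
  case False
  then have C0: "C = 0" using C by simp
  have "B = 0"
  proof (rule ccontr)
    assume "B \<noteq> 0"
    have "0 \<le> A - 2 * ((A + 1) / (2 * B)) * B + ((A + 1) / (2 * B))\<^sup>2 * C" by (rule h)
    also have "\<dots> = -1" using \<open>B \<noteq> 0\<close> C0 by (simp add: field_simps)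
    finally show False by simp
  qed
  then show ?thesis using C0 by simp
qed

lemma cs_int:
  fixes u v :: "real \<Rightarrow> real"
  assumes u: "continuous_on {a..b} u" and v: "continuous_on {a..b} v"
  shows "integral {a..b} (\<lambda>x. u x * v x) \<le> sqrt (integral {a..b} (\<lambda>x. (u x)\<^sup>2)) * sqrt (integral {a..b} (\<lambda>x. (v x)\<^sup>2))"
proof -
  define A where "A = integral {a..b} (\<lambda>x. (u x)\<^sup>2)"
  define B where "B = integral {a..b} (\<lambda>x. u x * v x)"
  define C where "C = integral {a..b} (\<lambda>x. (v x)\<^sup>2)"
  have iu: "(\<lambda>x. (u x)\<^sup>2) integrable_on {a..b}" by (rule integrable_continuous_real) (intro continuous_intros u)
  have iv: "(\<lambda>x. (v x)\<^sup>2) integrable_on {a..b}" by (rule integrable_continuous_real) (intro continuous_intros v)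
  have iuv: "(\<lambda>x. u x * v x) integrable_on {a..b}" by (rule integrable_continuous_real) (intro continuous_intros u v)
  have A0: "A \<ge> 0" unfolding A_def by (rule integral_nonneg[OF iu]) auto
  have C0: "C \<ge> 0" unfolding C_def by (rule integral_nonneg[OF iv]) auto
  have "B\<^sup>2 \<le> A * C"
  proof (rule disc_lemma[OF C0])
    fix t :: real
    have i1: "(\<lambda>x. (u x - t * v x)\<^sup>2) integrable_on {a..b}" by (rule integrable_continuous_real) (intro continuous_intros u v)
    have "0 \<le> integral {a..b} (\<lambda>x. (u x - t * v x)\<^sup>2)" by (rule integral_nonneg[OF i1]) auto
    also have "integral {a..b} (\<lambda>x. (u x - t * v x)\<^sup>2)
        = integral {a..b} (\<lambda>x. ((u x)\<^sup>2 - (2 * t) * (u x * v x)) + t\<^sup>2 * (v x)\<^sup>2)"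
      by (rule integral_cong) (simp add: power2_eq_square algebra_simps)
    also have "\<dots> = integral {a..b} (\<lambda>x. (u x)\<^sup>2 - (2 * t) * (u x * v x)) + integral {a..b} (\<lambda>x. t\<^sup>2 * (v x)\<^sup>2)"
      by (rule Henstock_Kurzweil_Integration.integral_add)
        (intro Henstock_Kurzweil_Integration.integrable_diff iu int_cmul iuv, rule int_cmul[OF iv])
    also have "integral {a..b} (\<lambda>x. (u x)\<^sup>2 - (2 * t) * (u x * v x)) = A - (2 * t) * B"
      unfolding A_def B_def
      by (subst Henstock_Kurzweil_Integration.integral_diff[OF iu int_cmul[OF iuv]]) simp
    also have "integral {a..b} (\<lambda>x. t\<^sup>2 * (v x)\<^sup>2) = t\<^sup>2 * C" unfolding C_def by simp
    finally show "0 \<le> A - 2 * t * B + t\<^sup>2 * C" by simp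
  qed
  then have "\<bar>B\<bar> \<le> sqrt (A * C)" using real_le_rsqrt by (metis power2_abs)
  then have "B \<le> sqrt A * sqrt C" by (simp add: real_sqrt_mult)
  then show ?thesis by (simp add: A_def B_def C_def)
qed

lemma deriv_from_rep:
  fixes F f :: "real \<Rightarrow> real"
  assumes rep: "\<forall>x\<in>{0..L}. F x = F 0 + integral {0..x} f"
    and fc: "continuous_on {0..L} f"
    and x: "x \<in> {0..L}"
  shows "(F has_real_derivative f x) (at x within {0..L})"
proof -
  have i: "((\<lambda>x. integral {0..x} f) has_real_derivative f x) (at x within {0..L})"
    by (rule integral_has_real_derivative[OF fc x])
  have "((\<lambda>x. F 0 + integral {0..x} f) has_real_derivative f x) (at x within {0..L})"
    using DERIV_add[OF DERIV_const i] by simp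
  then show ?thesis
    by (rule has_field_derivative_transform_within[where d=1]) (use x in \<open>auto simp: rep[rule_format, symmetric]\<close>)
qed

lemma cont_from_rep:
  fixes F f :: "real \<Rightarrow> real"
  assumes rep: "\<forall>x\<in>{0..L}. F x = F 0 + integral {0..x} f"
    and fi: "f integrable_on {0..L}"
  shows "continuous_on {0..L} F"
proof -
  have "continuous_on {0..L} (\<lambda>x. F 0 + integral {0..x} f)"
    by (intro continuous_intros indefinite_integral_continuous_1 fi)
  then show ?thesis by (rule continuous_on_eq) (simp add: rep[rule_format, symmetric])
qed

lemma chain_facts:
  fixes f :: "nat \<Rightarrow> real \<Rightarrow> real"
  assumes rep: "\<forall>k<4. \<forall>x\<in>{0..L}. f k x = f k 0 + integral {0..x} (f (Suc k))"
    and f4: "f 4 absolutely_integrable_on {0..L}"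
  shows "continuous_on {0..L} (f 3)" "continuous_on {0..L} (f 2)"
    "continuous_on {0..L} (f 1)" "continuous_on {0..L} (f 0)"
proof -
  have r: "\<forall>x\<in>{0..L}. f k x = f k 0 + integral {0..x} (f (Suc k))" if "k < 4" for k
    using rep that by blast
  have i4: "f 4 integrable_on {0..L}" using f4 absolutely_integrable_on_def by blast
  have s: "Suc 3 = (4::nat)" "Suc 2 = (3::nat)" "Suc 1 = (2::nat)" "Suc 0 = (1::nat)" by simp_all
  have l: "(3::nat) < 4" "(2::nat) < 4" "(1::nat) < 4" "(0::nat) < 4" by simp_all
  show c3: "continuous_on {0..L} (f 3)"
    using cont_from_rep[OF r[OF l(1)]] i4 unfolding s by blast
  show c2: "continuous_on {0..L} (f 2)"
    using cont_from_rep[OF r[OF l(2)]] integrable_continuous_real[OF c3] unfolding s by blast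
  show c1: "continuous_on {0..L} (f 1)"
    using cont_from_rep[OF r[OF l(3)]] integrable_continuous_real[OF c2] unfolding s by blast
  show c0: "continuous_on {0..L} (f 0)"
    using cont_from_rep[OF r[OF l(4)]] integrable_continuous_real[OF c1] unfolding s by blast
qed

lemma energy_id:
  fixes f :: "nat \<Rightarrow> real \<Rightarrow> real"
  assumes L: "L \<ge> 0"
    and rep: "\<forall>k<4. \<forall>x\<in>{0..L}. f k x = f k 0 + integral {0..x} (f (Suc k))"
    and f4: "f 4 absolutely_integrable_on {0..L}"
    and bc: "f 0 0 = 0" "f 0 L = 0" "f 2 0 = 0" "f 2 L = 0"
  shows "integral {0..L} (\<lambda>x. f 4 x * f 0 x) = integral {0..L} (\<lambda>x. (f 2 x)\<^sup>2)"
proof -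
  note c = chain_facts[OF rep f4]
  have r: "\<forall>x\<in>{0..L}. f k x = f k 0 + integral {0..x} (f (Suc k))" if "k < 4" for k
    using rep that by blast
  have s: "Suc 3 = (4::nat)" "Suc 2 = (3::nat)" "Suc 1 = (2::nat)" "Suc 0 = (1::nat)" by simp_all
  have l: "(3::nat) < 4" "(2::nat) < 4" "(1::nat) < 4" "(0::nat) < 4" by simp_all
  have r3: "\<forall>x\<in>{0..L}. f 3 x = f 3 0 + integral {0..x} (f 4)" using r[OF l(1)] unfolding s .
  have r2: "\<forall>x\<in>{0..L}. f 2 x = f 2 0 + integral {0..x} (f 3)" using r[OF l(2)] unfolding s .
  have r1: "\<forall>x\<in>{0..L}. f 1 x = f 1 0 + integral {0..x} (f 2)" using r[OF l(3)] unfolding s .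
  have r0: "\<forall>x\<in>{0..L}. f 0 x = f 0 0 + integral {0..x} (f 1)" using r[OF l(4)] unfolding s .
  have d0: "\<forall>x\<in>{0..L}. (f 0 has_real_derivative f 1 x) (at x within {0..L})"
    using deriv_from_rep[OF r0 c(3)] by blast
  have d1: "\<forall>x\<in>{0..L}. (f 1 has_real_derivative f 2 x) (at x within {0..L})"
    using deriv_from_rep[OF r1 c(2)] by blast
  have "integral {0..L} (\<lambda>x. f 4 x * f 0 x) = f 3 L * f 0 L - f 3 0 * f 0 0 - integral {0..L} (\<lambda>x. f 3 x * f 1 x)"
    by (rule ibp_gen[OF L f4 r3 d0 c(3)])
  also have "integral {0..L} (\<lambda>x. f 3 x * f 1 x) = f 2 L * f 1 L - f 2 0 * f 1 0 - integral {0..L} (\<lambda>x. f 2 x * f 2 x)"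
    by (rule ibp_gen[OF L absolutely_integrable_continuous_real[OF c(1)] r2 d1 c(2)])
  finally show ?thesis using bc by (simp add: power2_eq_square)
qed


lemma energy_ineq:
  fixes f :: "nat \<Rightarrow> real \<Rightarrow> real" and R S :: "real \<Rightarrow> real"
  assumes L: "L \<ge> 0" and m: "m \<ge> 0"
    and rep: "\<forall>k<4. \<forall>x\<in>{0..L}. f k x = f k 0 + integral {0..x} (f (Suc k))"
    and f4: "f 4 absolutely_integrable_on {0..L}"
    and bc: "f 0 0 = 0" "f 0 L = 0" "f 2 0 = 0" "f 2 L = 0"
    and N: "negligible N"
    and eqn: "\<forall>x\<in>{0..L} - N. f 0 x + lam * f 4 x = R x"
    and Sc: "continuous_on {0..L} S"
    and Rb: "\<forall>x\<in>{0..L} - N. \<bar>R x - S x\<bar> \<le> m"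
  shows "integral {0..L} (\<lambda>x. (f 0 x)\<^sup>2) + lam * integral {0..L} (\<lambda>x. (f 2 x)\<^sup>2)
         \<le> integral {0..L} (\<lambda>x. S x * f 0 x) + m * sqrt L * norm0 L (f 0)"
proof -
  note c = chain_facts[OF rep f4]
  have i00: "(\<lambda>x. (f 0 x)\<^sup>2) integrable_on {0..L}"
    by (rule integrable_continuous_real) (intro continuous_intros c(4))
  have i40: "(\<lambda>x. f 4 x * f 0 x) integrable_on {0..L}" by (rule int_prod[OF f4 c(4)])
  define P where "P x = (f 0 x)\<^sup>2 + lam * (f 4 x * f 0 x)" for x
  have iP: "P integrable_on {0..L}" unfolding P_def
    by (intro Henstock_Kurzweil_Integration.integrable_add i00 int_cmul i40)
  have IP: "integral {0..L} P = integral {0..L} (\<lambda>x. (f 0 x)\<^sup>2) + lam * integral {0..L} (\<lambda>x. (f 2 x)\<^sup>2)"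
  proof -
    have "integral {0..L} P = integral {0..L} (\<lambda>x. (f 0 x)\<^sup>2) + integral {0..L} (\<lambda>x. lam * (f 4 x * f 0 x))"
      unfolding P_def by (rule Henstock_Kurzweil_Integration.integral_add[OF i00 int_cmul[OF i40]])
    also have "integral {0..L} (\<lambda>x. lam * (f 4 x * f 0 x)) = lam * integral {0..L} (\<lambda>x. f 4 x * f 0 x)"
      by simp
    also have "integral {0..L} (\<lambda>x. f 4 x * f 0 x) = integral {0..L} (\<lambda>x. (f 2 x)\<^sup>2)"
      by (rule energy_id[OF L rep f4 bc])
    finally show ?thesis .
  qed
  define Q where "Q x = f 0 x * R x" for x
  have QP: "Q x = P x" if "x \<in> {0..L} - N" for x
  proof -
    have "R x = f 0 x + lam * f 4 x" using eqn that by auto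
    then show ?thesis by (simp add: Q_def P_def power2_eq_square algebra_simps)
  qed
  have iQ: "Q integrable_on {0..L}" by (rule integrable_spike[OF iP N QP])
  have IQ: "integral {0..L} Q = integral {0..L} P"
    by (rule integral_spike[where S=N and T="{0..L}" and g=Q and f=P, OF N QP, symmetric])
  define S0 where "S0 x = S x * f 0 x" for x
  have iS0: "S0 integrable_on {0..L}" unfolding S0_def
    by (rule integrable_continuous_real) (intro continuous_intros Sc c(4))
  define D where "D x = (if x \<in> N then 0 else Q x - S0 x)" for x
  have DQ: "D x = Q x - S0 x" if "x \<in> {0..L} - N" for x using that by (simp add: D_def)
  have iD: "D integrable_on {0..L}"
    by (rule integrable_spike[OF Henstock_Kurzweil_Integration.integrable_diff[OF iQ iS0] N DQ])
  have ID: "integral {0..L} D = integral {0..L} Q - integral {0..L} S0"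
    using integral_spike[where S=N and T="{0..L}" and g=D and f="\<lambda>x. Q x - S0 x", OF N DQ] Henstock_Kurzweil_Integration.integral_diff[OF iQ iS0] by simp
  have iaf: "(\<lambda>x. m * \<bar>f 0 x\<bar>) integrable_on {0..L}"
    by (rule integrable_continuous_real) (intro continuous_intros c(4))
  have "norm (integral {0..L} D) \<le> integral {0..L} (\<lambda>x. m * \<bar>f 0 x\<bar>)"
  proof (rule integral_norm_bound_integral[OF iD iaf])
    fix x assume x: "x \<in> {0..L}"
    show "norm (D x) \<le> m * \<bar>f 0 x\<bar>"
    proof (cases "x \<in> N")
      case True then show ?thesis using m by (simp add: D_def)
    next
      case False
      then have xx: "x \<in> {0..L} - N" using x by simp
      have "D x = f 0 x * (R x - S x)" using DQ[OF xx] by (simp add: Q_def S0_def algebra_simps)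
      then have "norm (D x) = \<bar>f 0 x\<bar> * \<bar>R x - S x\<bar>" by (simp add: abs_mult)
      also have "\<dots> \<le> \<bar>f 0 x\<bar> * m" using Rb xx by (simp add: mult_left_mono)
      finally show ?thesis by (simp add: mult.commute)
    qed
  qed
  then have D1: "integral {0..L} D \<le> m * integral {0..L} (\<lambda>x. \<bar>f 0 x\<bar>)" by simp
  have "integral {0..L} (\<lambda>x. \<bar>f 0 x\<bar> * 1) \<le> sqrt (integral {0..L} (\<lambda>x. (\<bar>f 0 x\<bar>)\<^sup>2)) * sqrt (integral {0..L} (\<lambda>x. (1::real)\<^sup>2))"
    by (rule cs_int) (intro continuous_intros c(4))+
  then have "integral {0..L} (\<lambda>x. \<bar>f 0 x\<bar>) \<le> norm0 L (f 0) * sqrt L"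
    using L by (simp add: norm0_def)
  then have "m * integral {0..L} (\<lambda>x. \<bar>f 0 x\<bar>) \<le> m * (norm0 L (f 0) * sqrt L)"
    using m by (simp add: mult_left_mono)
  then have D2: "integral {0..L} D \<le> m * sqrt L * norm0 L (f 0)" using D1 by (simp add: algebra_simps)
  have "integral {0..L} (\<lambda>x. (f 0 x)\<^sup>2) + lam * integral {0..L} (\<lambda>x. (f 2 x)\<^sup>2) = integral {0..L} S0 + integral {0..L} D"
    using IP IQ ID by simp
  moreover have "integral {0..L} S0 = integral {0..L} (\<lambda>x. S x * f 0 x)" by (simp add: S0_def[abs_def])
  ultimately show ?thesis using D2 by linarith
qed

lemma mvt_powr:
  fixes x a :: real
  assumes x: "x > 0"
  shows "\<exists>z. x < z \<and> z < x + 1 \<and> (x + 1) powr a - x powr a = a * z powr (a - 1)"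
proof -
  have "\<exists>z. x < z \<and> z < x + 1 \<and> (x + 1) powr a - x powr a = (x + 1 - x) * (a * z powr (a - 1))"
    by (rule MVT2) (use x in \<open>auto intro!: has_real_derivative_powr\<close>)
  then show ?thesis by simp
qed

lemma b0: "bcoef g 0 = 1" by (simp add: bcoef_def)

lemma b_mvt:
  assumes "j \<ge> 1"
  shows "\<exists>z. real j < z \<and> z < real j + 1 \<and> bcoef g j = (1 - g) * z powr (- g)"
proof -
  have "real j > 0" using assms by simp
  from mvt_powr[OF this, of "1 - g"] show ?thesis by (simp add: bcoef_def)
qed

lemma b_pos:
  assumes g: "0 < g" "g < 1"
  shows "bcoef g j > 0"
proof (cases "j = 0")
  case True then show ?thesis by (simp add: b0)
next
  case False
  then obtain z where z: "real j < z" "bcoef g j = (1 - g) * z powr (- g)" using b_mvt[of j g] by auto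
  have "z > 0" using z(1) False by linarith
  then show ?thesis using z g by simp
qed

lemma b_mono:
  assumes g: "0 < g" "g < 1"
  shows "bcoef g (Suc j) \<le> bcoef g j"
proof (cases "j = 0")
  case True
  obtain z where z: "1 < z" "bcoef g 1 = (1 - g) * z powr (- g)" using b_mvt[of 1 g] by auto
  have "z powr (- g) \<le> 1 powr (- g)" by (rule powr_mono2') (use z g in auto)
  then have "bcoef g 1 \<le> 1 - g" using z g by (simp add: mult_left_le)
  then show ?thesis using True g by (simp add: b0)
next
  case False
  obtain z where z: "real j < z" "z < real j + 1" "bcoef g j = (1 - g) * z powr (- g)" using b_mvt[of j g] False by auto
  obtain w where w: "real (Suc j) < w" "bcoef g (Suc j) = (1 - g) * w powr (- g)" using b_mvt[of "Suc j" g] by auto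
  have "w powr (- g) \<le> z powr (- g)" by (rule powr_mono2') (use z w g False in auto)
  then show ?thesis using z w g by (simp add: mult_left_mono)
qed

lemma b_lower:
  assumes g: "0 < g" "g < 1" and p: "p \<ge> 1"
  shows "(1 - g) * real p powr (- g) \<le> bcoef g (p - 1)"
proof (cases "p = 1")
  case True then show ?thesis using g by (simp add: b0)
next
  case False
  then have p1: "p - 1 \<ge> 1" using p by simp
  obtain z where z: "real (p - 1) < z" "z < real (p - 1) + 1" "bcoef g (p - 1) = (1 - g) * z powr (- g)"
    using b_mvt[OF p1] by auto
  have "real (p - 1) + 1 = real p" using p by simp
  then have "real p powr (- g) \<le> z powr (- g)" by (intro powr_mono2') (use z g p1 in auto)
  then show ?thesis using z g by (simp add: mult_left_mono)
qed

lemma b_antimono: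
  assumes g: "0 < g" "g < 1" and "n \<le> m"
  shows "bcoef g m \<le> bcoef g n"
  using lift_Suc_antimono_le[of "bcoef g", OF b_mono[OF g] assms(3)] .

lemma tele:
  fixes b :: "nat \<Rightarrow> real"
  assumes "p \<ge> 1"
  shows "(\<Sum>j\<in>{1..p - 1}. b j - b (j + 1)) = b 1 - b p"
  using assms
proof (induction p rule: dec_induct)
  case base then show ?case by simp
next
  case (step n)
  have "{1..Suc n - 1} = insert n {1..n - 1}" using step.hyps by auto
  then show ?case using step by (simp add: Suc_diff_le)
qed

lemma disc_gronwall:
  fixes E b :: "nat \<Rightarrow> real" and M :: real
  assumes M: "M \<ge> 0" and b0: "b 0 = 1" and bpos: "\<And>j. b j > 0" and bmono: "\<And>j. b (Suc j) \<le> b j"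
    and E1: "E 1 \<le> M"
    and Estep: "\<And>p. 1 \<le> p \<Longrightarrow> p + 1 \<le> K \<Longrightarrow>
        E (p + 1) \<le> (1 - b 1) * E p + (\<Sum>j\<in>{1..p - 1}. (b j - b (j + 1)) * E (p - j)) + M"
  shows "1 \<le> q \<Longrightarrow> q \<le> K \<Longrightarrow> E q \<le> M / b (q - 1)"
proof (induction q rule: less_induct)
  case (less q)
  have anti: "b m \<le> b n" if "n \<le> m" for n m using lift_Suc_antimono_le[of b, OF bmono that] .
  show ?case
  proof (cases "q = 1")
    case True then show ?thesis using E1 b0 by simp
  next
    case False
    define p where "p = q - 1"
    have p: "1 \<le> p" "p + 1 \<le> K" "q = p + 1" using less.prems False by (auto simp: p_def)
    have bp: "b p > 0" by (rule bpos)
    have Ep: "E p \<le> M / b p"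
    proof -
      have "E p \<le> M / b (p - 1)" using less.IH[of p] p by simp
      also have "\<dots> \<le> M / b p" using anti[of "p - 1" p] bpos M by (simp add: divide_left_mono)
      finally show ?thesis .
    qed
    have Ej: "(b j - b (j + 1)) * E (p - j) \<le> (b j - b (j + 1)) * (M / b p)" if j: "j \<in> {1..p - 1}" for j
    proof -
      have "E (p - j) \<le> M / b (p - j - 1)" using less.IH[of "p - j"] p j by auto
      also have "\<dots> \<le> M / b p" using anti[of "p - j - 1" p] bpos M by (simp add: divide_left_mono)
      finally have X: "E (p - j) \<le> M / b p" .
      have "0 \<le> b j - b (j + 1)" using bmono[of j] by simp
      then show ?thesis by (rule mult_left_mono[OF X])
    qed
    have "E q \<le> (1 - b 1) * E p + (\<Sum>j\<in>{1..p - 1}. (b j - b (j + 1)) * E (p - j)) + M"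
      using Estep[OF p(1,2)] p(3) by simp
    also have "\<dots> \<le> (1 - b 1) * (M / b p) + (\<Sum>j\<in>{1..p - 1}. (b j - b (j + 1)) * (M / b p)) + M"
    proof -
      have "0 \<le> 1 - b 1" using bmono[of 0] b0 by simp
      then have "(1 - b 1) * E p \<le> (1 - b 1) * (M / b p)"
        by (rule mult_left_mono[OF Ep])
      moreover have "(\<Sum>j\<in>{1..p - 1}. (b j - b (j + 1)) * E (p - j)) \<le> (\<Sum>j\<in>{1..p - 1}. (b j - b (j + 1)) * (M / b p))"
        by (rule sum_mono) (rule Ej)
      ultimately show ?thesis by linarith
    qed
    also have "(\<Sum>j\<in>{1..p - 1}. (b j - b (j + 1)) * (M / b p)) = (b 1 - b p) * (M / b p)"
      unfolding sum_distrib_right[symmetric] tele[OF p(1), of b] ..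
    also have "(1 - b 1) * (M / b p) + (b 1 - b p) * (M / b p) + M = M / b p"
      using bp by (simp add: field_simps)
    finally show ?thesis using p by simp
  qed
qed


lemma disc_gronwall2:
  fixes E b :: "nat \<Rightarrow> real" and M :: real
  assumes M: "M \<ge> 0" and b0: "b 0 = 1" and bpos: "\<And>j. b j > 0" and bmono: "\<And>j. b (Suc j) \<le> b j"
    and Estep: "\<And>p. p + 1 \<le> K \<Longrightarrow> E (p + 1) \<le> (\<Sum>j<p. (b j - b (j + 1)) * E (p - j)) + M"
  shows "1 \<le> q \<Longrightarrow> q \<le> K \<Longrightarrow> E q \<le> M / b (q - 1)"
proof (induction q rule: less_induct)
  case (less q)
  have anti: "b m \<le> b n" if "n \<le> m" for n m using lift_Suc_antimono_le[of b, OF bmono that] .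
  define p where "p = q - 1"
  have p: "p + 1 \<le> K" "q = p + 1" using less.prems by (auto simp: p_def)
  have bp: "b p > 0" by (rule bpos)
  have Ej: "(b j - b (j + 1)) * E (p - j) \<le> (b j - b (j + 1)) * (M / b p)" if j: "j < p" for j
  proof -
    have "E (p - j) \<le> M / b (p - j - 1)" using less.IH[of "p - j"] p j by auto
    also have "\<dots> \<le> M / b p" using anti[of "p - j - 1" p] bpos M by (simp add: divide_left_mono)
    finally have X: "E (p - j) \<le> M / b p" .
    have "0 \<le> b j - b (j + 1)" using bmono[of j] by simp
    then show ?thesis by (rule mult_left_mono[OF X])
  qed
  have "E q \<le> (\<Sum>j<p. (b j - b (j + 1)) * E (p - j)) + M"
    using Estep[OF p(1)] p(2) by simp
  also have "\<dots> \<le> (\<Sum>j<p. (b j - b (j + 1)) * (M / b p)) + M"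
    using sum_mono[of "{..<p}", OF Ej] by simp
  also have "(\<Sum>j<p. (b j - b (j + 1)) * (M / b p)) = (b 0 - b p) * (M / b p)"
    unfolding sum_distrib_right[symmetric] using sum_lessThan_telescope'[of b p] by simp
  also have "(b 0 - b p) * (M / b p) + M = M / b p"
    using bp b0 by (simp add: field_simps)
  finally show ?case using p by simp
qed

lemma abel:
  fixes b c :: "nat \<Rightarrow> real"
  shows "(\<Sum>j<Suc n. b j * (c j - c (Suc j))) = b 0 * c 0 - (\<Sum>j<n. (b j - b (Suc j)) * c (Suc j)) - b n * c (Suc n)"
  by (induction n) (simp_all add: algebra_simps)

lemma alg_step:
  fixes Y y b :: "nat \<Rightarrow> real"
  assumes b0: "b 0 = 1"
    and ds: "y (p + 1) + B * D4 = (\<Sum>j<p. (b j - b (j + 1)) * y (p - j)) + b p * y 0 + \<beta> * U"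
    and ex: "\<beta> * U = (\<Sum>j<p + 1. b j * (Y (p + 1 - j) - Y (p + 1 - j - 1))) + \<beta> * l + B * Y4"
    and y0: "Y 0 = y 0"
  shows "(Y (p + 1) - y (p + 1)) + B * (Y4 - D4) - (\<Sum>j<p. (b j - b (j + 1)) * (Y (p - j) - y (p - j))) = - (\<beta> * l)"
proof -
  have A: "(\<Sum>j<p + 1. b j * (Y (p + 1 - j) - Y (p + 1 - j - 1)))
      = Y (p + 1) - (\<Sum>j<p. (b j - b (j + 1)) * Y (p - j)) - b p * Y 0"
    using abel[of b "\<lambda>j. Y (p + 1 - j)" p] b0 by simp
  have S: "(\<Sum>j<p. (b j - b (j + 1)) * (Y (p - j) - y (p - j)))
      = (\<Sum>j<p. (b j - b (j + 1)) * Y (p - j)) - (\<Sum>j<p. (b j - b (j + 1)) * y (p - j))"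
    unfolding sum_subtractf[symmetric] by (rule sum.cong) (simp_all add: algebra_simps)
  show ?thesis using ds ex A S y0 by (simp add: algebra_simps)
qed

lemma E_le:
  fixes E Z n :: real
  assumes "E \<ge> 0" "Z \<ge> 0" "n \<ge> 0" "n \<le> E" "E\<^sup>2 \<le> Z * n"
  shows "E \<le> Z"
proof (cases "E = 0")
  case True then show ?thesis using assms by simp
next
  case False
  then have Ep: "E > 0" using assms by simp
  have "E * E \<le> Z * E" using assms mult_left_mono[of n E Z] by (simp add: power2_eq_square)
  then show ?thesis using Ep by simp
qed

lemma norm0_sq:
  assumes "continuous_on {0..L} g"
  shows "(norm0 L g)\<^sup>2 = integral {0..L} (\<lambda>x. (g x)\<^sup>2)"
proof -
  have "(\<lambda>x. (g x)\<^sup>2) integrable_on {0..L}" by (rule integrable_continuous_real) (intro continuous_intros assms)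
  then have "integral {0..L} (\<lambda>x. (g x)\<^sup>2) \<ge> 0" by (rule Henstock_Kurzweil_Integration.integral_nonneg) auto
  then show ?thesis unfolding norm0_def by (rule real_sqrt_pow2)
qed

lemma norm0_nonneg: "norm0 L g \<ge> 0"
proof (cases "(\<lambda>x. (g x)\<^sup>2) integrable_on {0..L}")
  case True
  then have "integral {0..L} (\<lambda>x. (g x)\<^sup>2) \<ge> 0" by (rule Henstock_Kurzweil_Integration.integral_nonneg) auto
  then show ?thesis by (simp add: norm0_def)
next
  case False
  then show ?thesis by (simp add: norm0_def not_integrable_integral)
qed

lemma energy_step:
  fixes f g :: "nat \<Rightarrow> real \<Rightarrow> real" and w G :: "nat \<Rightarrow> real" and I :: "nat set"
  assumes L: "L \<ge> 0" and m: "m \<ge> 0" and lam: "lam \<ge> 0"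
    and rep: "\<forall>k<4. \<forall>x\<in>{0..L}. f k x = f k 0 + integral {0..x} (f (Suc k))"
    and f4: "f 4 absolutely_integrable_on {0..L}"
    and bc: "f 0 0 = 0" "f 0 L = 0" "f 2 0 = 0" "f 2 L = 0"
    and N: "negligible N"
    and Rb: "\<forall>x\<in>{0..L} - N. \<bar>f 0 x + lam * f 4 x - (\<Sum>i\<in>I. w i * g i x)\<bar> \<le> m"
    and I: "finite I" and w: "\<forall>i\<in>I. w i \<ge> 0"
    and gc: "\<forall>i\<in>I. continuous_on {0..L} (g i)"
    and G: "\<forall>i\<in>I. norm0 L (g i) \<le> G i"
  shows "sqrt ((norm0 L (f 0))\<^sup>2 + lam * (norm0 L (f 2))\<^sup>2) \<le> (\<Sum>i\<in>I. w i * G i) + m * sqrt L"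
proof -
  note c = chain_facts[OF rep f4]
  define S where "S x = (\<Sum>i\<in>I. w i * g i x)" for x
  have Sc: "continuous_on {0..L} S" unfolding S_def
    by (intro continuous_on_sum continuous_intros) (use gc in auto)
  have ei: "integral {0..L} (\<lambda>x. (f 0 x)\<^sup>2) + lam * integral {0..L} (\<lambda>x. (f 2 x)\<^sup>2)
         \<le> integral {0..L} (\<lambda>x. S x * f 0 x) + m * sqrt L * norm0 L (f 0)"
    by (rule energy_ineq[OF L m rep f4 bc N _ Sc, where R="\<lambda>x. f 0 x + lam * f 4 x"]) (use Rb in \<open>auto simp: S_def\<close>)
  define n0 where "n0 = norm0 L (f 0)"
  have n0: "n0 \<ge> 0" by (simp add: n0_def norm0_nonneg)
  have int_i: "integral {0..L} (\<lambda>x. g i x * f 0 x) \<le> G i * n0" if i: "i \<in> I" for i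
  proof -
    have "integral {0..L} (\<lambda>x. g i x * f 0 x) \<le> sqrt (integral {0..L} (\<lambda>x. (g i x)\<^sup>2)) * sqrt (integral {0..L} (\<lambda>x. (f 0 x)\<^sup>2))"
      by (rule cs_int) (use gc i c in auto)
    also have "\<dots> = norm0 L (g i) * n0" by (simp add: norm0_def n0_def)
    also have "\<dots> \<le> G i * n0" using G i n0 by (simp add: mult_right_mono)
    finally show ?thesis .
  qed
  have "integral {0..L} (\<lambda>x. S x * f 0 x) = integral {0..L} (\<lambda>x. \<Sum>i\<in>I. w i * (g i x * f 0 x))"
    unfolding S_def by (simp add: sum_distrib_right mult.assoc)
  also have "\<dots> = (\<Sum>i\<in>I. integral {0..L} (\<lambda>x. w i * (g i x * f 0 x)))"
  proof (rule integral_sum[OF I])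
    fix i assume i: "i \<in> I"
    show "(\<lambda>x. w i * (g i x * f 0 x)) integrable_on {0..L}"
      by (rule integrable_continuous_real) (use gc i c in \<open>auto intro!: continuous_intros\<close>)
  qed
  also have "\<dots> = (\<Sum>i\<in>I. w i * integral {0..L} (\<lambda>x. g i x * f 0 x))" by simp
  also have "\<dots> \<le> (\<Sum>i\<in>I. w i * (G i * n0))"
    by (rule sum_mono) (use int_i w in \<open>auto intro: mult_left_mono\<close>)
  finally have SI: "integral {0..L} (\<lambda>x. S x * f 0 x) \<le> (\<Sum>i\<in>I. w i * G i) * n0"
    by (simp add: sum_distrib_right mult.assoc)
  define E where "E = sqrt ((norm0 L (f 0))\<^sup>2 + lam * (norm0 L (f 2))\<^sup>2)"
  have pos2: "lam * (norm0 L (f 2))\<^sup>2 \<ge> 0" using lam by simp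
  have E2: "E\<^sup>2 = (norm0 L (f 0))\<^sup>2 + lam * (norm0 L (f 2))\<^sup>2" unfolding E_def
    by (rule real_sqrt_pow2) (intro add_nonneg_nonneg zero_le_power2 pos2)
  have "E\<^sup>2 = integral {0..L} (\<lambda>x. (f 0 x)\<^sup>2) + lam * integral {0..L} (\<lambda>x. (f 2 x)\<^sup>2)"
    unfolding E2 using norm0_sq[OF c(4)] norm0_sq[OF c(2)] by simp
  also have "\<dots> \<le> ((\<Sum>i\<in>I. w i * G i) + m * sqrt L) * n0"
    using ei SI by (simp add: n0_def algebra_simps)
  finally have Ebound: "E\<^sup>2 \<le> ((\<Sum>i\<in>I. w i * G i) + m * sqrt L) * n0" .
  have Gnn: "G i \<ge> 0" if "i \<in> I" for i using G that norm0_nonneg order_trans by blast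
  have Z: "(\<Sum>i\<in>I. w i * G i) + m * sqrt L \<ge> 0"
    using m L w Gnn by (intro add_nonneg_nonneg sum_nonneg) auto
  have nE: "n0 \<le> E" unfolding E_def n0_def
    using pos2 real_sqrt_le_mono[of "(norm0 L (f 0))\<^sup>2" "(norm0 L (f 0))\<^sup>2 + lam * (norm0 L (f 2))\<^sup>2"]
    by (simp add: norm0_nonneg)
  have "E \<le> (\<Sum>i\<in>I. w i * G i) + m * sqrt L"
    by (rule E_le[OF _ Z n0 nE Ebound]) (unfold E_def, intro real_sqrt_ge_zero add_nonneg_nonneg zero_le_power2 pos2)
  then show ?thesis by (simp add: E_def)
qed

lemma Y_rep:
  fixes Yk :: "nat \<Rightarrow> real \<Rightarrow> real"
  assumes d: "\<forall>k<4. \<forall>x. (Yk k has_real_derivative Yk (Suc k) x) (at x)"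
    and k: "k < 4" and x: "0 \<le> x"
  shows "(Yk (Suc k) has_integral (Yk k x - Yk k 0)) {0..x}"
proof (rule fundamental_theorem_of_calculus[OF x])
  fix z assume "z \<in> {0..x}"
  have "(Yk k has_real_derivative Yk (Suc k) z) (at z)" using d k by blast
  then have "(Yk k has_real_derivative Yk (Suc k) z) (at z within {0..x})" by (rule has_field_derivative_at_within)
  then show "(Yk k has_vector_derivative Yk (Suc k) z) (at z within {0..x})"
    by (simp add: has_real_derivative_iff_has_vector_derivative)
qed

lemma D_int:
  fixes D :: "nat \<Rightarrow> real \<Rightarrow> real"
  assumes rep: "\<forall>k<4. \<forall>x\<in>{0..L}. D k x = D k 0 + integral {0..x} (D (Suc k))"
    and f4: "D 4 absolutely_integrable_on {0..L}"
    and k: "k < 4"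
  shows "D (Suc k) integrable_on {0..L}"
proof -
  note c = chain_facts[OF rep f4]
  have "k = 0 \<or> k = 1 \<or> k = 2 \<or> k = 3" using k by auto
  then show ?thesis
  proof (elim disjE)
    assume "k = 0" then show ?thesis using integrable_continuous_real[OF c(3)] by simp
  next
    assume "k = 1" then show ?thesis using integrable_continuous_real[OF c(2)] by (simp add: numeral_2_eq_2)
  next
    assume "k = 2" then show ?thesis using integrable_continuous_real[OF c(1)] by (simp add: numeral_3_eq_3 numeral_2_eq_2)
  next
    assume "k = 3"
    have i4: "D 4 integrable_on {0..L}" using f4 absolutely_integrable_on_def by blast
    then show ?thesis using \<open>k = 3\<close> by simp
  qed
qed

lemma H4_rep: "H4 L f D \<Longrightarrow> \<forall>k<4. \<forall>x\<in>{0..L}. D k x = D k 0 + integral {0..x} (D (Suc k))"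
  unfolding H4_def by blast

lemma H4_abs: "H4 L f D \<Longrightarrow> D 4 absolutely_integrable_on {0..L}"
  unfolding H4_def by blast

lemma err_rep:
  fixes Yk D :: "nat \<Rightarrow> real \<Rightarrow> real"
  assumes d: "\<forall>k<4. \<forall>x. (Yk k has_real_derivative Yk (Suc k) x) (at x)"
    and c4: "continuous_on UNIV (Yk 4)"
    and H: "H4 L f D"
  shows "\<forall>k<4. \<forall>x\<in>{0..L}. (\<lambda>k x. Yk k x - D k x) k x = (\<lambda>k x. Yk k x - D k x) k 0 + integral {0..x} ((\<lambda>k x. Yk k x - D k x) (Suc k))"
    and "(\<lambda>k x. Yk k x - D k x) 4 absolutely_integrable_on {0..L}"
proof -
  note rep = H4_rep[OF H] and f4 = H4_abs[OF H]
  show "\<forall>k<4. \<forall>x\<in>{0..L}. (\<lambda>k x. Yk k x - D k x) k x = (\<lambda>k x. Yk k x - D k x) k 0 + integral {0..x} ((\<lambda>k x. Yk k x - D k x) (Suc k))"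
  proof (intro allI impI ballI)
    fix k :: nat and x :: real assume k: "k < 4" and x: "x \<in> {0..L}"
    have YI: "(Yk (Suc k) has_integral (Yk k x - Yk k 0)) {0..x}" by (rule Y_rep[OF d k]) (use x in auto)
    have DI: "D (Suc k) integrable_on {0..x}"
      by (rule integrable_on_subinterval[OF D_int[OF rep f4 k]]) (use x in auto)
    have "integral {0..x} (\<lambda>z. Yk (Suc k) z - D (Suc k) z) = integral {0..x} (Yk (Suc k)) - integral {0..x} (D (Suc k))"
      by (rule Henstock_Kurzweil_Integration.integral_diff[OF has_integral_integrable[OF YI] DI])
    moreover have "integral {0..x} (Yk (Suc k)) = Yk k x - Yk k 0" using YI by (simp add: integral_unique)
    moreover have "D k x = D k 0 + integral {0..x} (D (Suc k))" using rep k x by blast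
    ultimately show "(\<lambda>k x. Yk k x - D k x) k x = (\<lambda>k x. Yk k x - D k x) k 0 + integral {0..x} ((\<lambda>k x. Yk k x - D k x) (Suc k))"
      by simp
  qed
  have Y4: "Yk 4 absolutely_integrable_on {0..L}"
    by (rule absolutely_integrable_continuous_real) (rule continuous_on_subset[OF c4], simp)
  then show "(\<lambda>k x. Yk k x - D k x) 4 absolutely_integrable_on {0..L}"
    using set_integral_diff(1)[OF Y4 f4] by simp
qed


lemma split_sum:
  fixes h :: "nat \<Rightarrow> real"
  assumes "p \<ge> 1"
  shows "(\<Sum>j<p. h j) = h 0 + (\<Sum>j\<in>{1..p - 1}. h j)"
proof -
  have "{..<p} = insert 0 {1..p - 1}" using assms by auto
  then show ?thesis by simp
qed

lemma norm0_le_norm2: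
  assumes "\<beta> * \<alpha> \<ge> 0"
  shows "norm0 L g \<le> norm2 L \<beta> \<alpha> g h"
proof -
  have "sqrt ((norm0 L g)\<^sup>2) \<le> sqrt ((norm0 L g)\<^sup>2 + \<beta> * \<alpha> * (norm0 L h)\<^sup>2)"
    using assms by (intro real_sqrt_le_mono) simp
  then show ?thesis by (simp add: norm2_def norm0_nonneg)
qed

lemma final_bound:
  fixes g dt T c L G bq :: real and q :: nat
  assumes g: "0 < g" "g < 1" and dt: "dt > 0" and c: "c \<ge> 0" and L: "L \<ge> 0" and G: "G > 0"
    and q: "q \<ge> 1" and qT: "real q * dt \<le> T"
    and bq: "(1 - g) * real q powr (- g) \<le> bq"
  shows "(G * dt powr g) * (c * dt powr (2 - g)) * sqrt L / bq \<le> (G * sqrt L * c / (1 - g)) * T powr g * dt powr (2 - g)"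
proof -
  have qpos: "real q > 0" using q by simp
  have lowpos: "(1 - g) * real q powr (- g) > 0" using g qpos by simp
  define A where "A = (G * dt powr g) * (c * dt powr (2 - g)) * sqrt L"
  have A0: "A \<ge> 0" using G c L by (simp add: A_def)
  have "A / bq \<le> A / ((1 - g) * real q powr (- g))"
    by (rule divide_left_mono[OF bq A0]) (use lowpos bq in auto)
  also have "A / ((1 - g) * real q powr (- g)) = A * real q powr g / (1 - g)"
    using g qpos by (simp add: powr_minus field_simps)
  also have "A * real q powr g = G * (real q * dt) powr g * (c * dt powr (2 - g)) * sqrt L"
    using qpos dt by (simp add: A_def powr_mult algebra_simps)
  also have "G * (real q * dt) powr g * (c * dt powr (2 - g)) * sqrt L \<le> G * T powr g * (c * dt powr (2 - g)) * sqrt L"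
  proof -
    have "(real q * dt) powr g \<le> T powr g" by (rule powr_mono2) (use g qpos dt qT in auto)
    then show ?thesis using G c L by (intro mult_right_mono mult_left_mono) auto
  qed
  finally have "A / bq \<le> G * T powr g * (c * dt powr (2 - g)) * sqrt L / (1 - g)"
    using g by (simp add: divide_right_mono)
  then show ?thesis by (simp add: A_def field_simps)
qed

theorem theorem2:
  fixes L T \<gamma> \<alpha> c :: real
    and y u :: "real \<Rightarrow> real \<Rightarrow> real" and v0 :: "real \<Rightarrow> real"
  assumes L_pos: "L > 0" and T_pos: "T > 0"
    and gam: "0 < \<gamma>" "\<gamma> < 1" and alpha_pos: "\<alpha> > 0"
    \<comment> \<open>smoothness of the exact solution in x (C^4 for each time)\<close>
    and y_xsmooth: "\<forall>t\<in>{0..T}. \<forall>k<4. \<forall>x. (dxk k y t has_real_derivative dxk (Suc k) y t x) (at x)"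
    and y_x4cont: "\<forall>t\<in>{0..T}. continuous_on UNIV (dxk 4 y t)"
    \<comment> \<open>regularity in t needed for the Caputo derivative\<close>
    and y_tcont: "\<forall>x\<in>{0..L}. continuous_on {0..T} (\<lambda>t. y x t)"
    and y_tdiff: "\<forall>x\<in>{0..L}. \<forall>s\<in>{0<..<T}. (\<lambda>t. y x t) differentiable (at s)"
    and y_caputo_int: "\<forall>x\<in>{0..L}. \<forall>t\<in>{0<..T}.
          (\<lambda>s. deriv (\<lambda>r. y x r) s * (t - s) powr (- \<gamma>)) integrable_on {0..t}"
    \<comment> \<open>the PDE, initial and boundary conditions\<close>
    and pde: "\<forall>x\<in>{0..L}. \<forall>t\<in>{0..T}. caputo \<gamma> y x t + \<alpha> * dxk 4 y t x = u x t"
    and init: "\<forall>x\<in>{0..L}. y x 0 = v0 x"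
    and bc: "\<forall>t\<in>{0..T}. y 0 t = 0 \<and> y L t = 0 \<and> dxk 2 y t 0 = 0 \<and> dxk 2 y t L = 0"
    \<comment> \<open>L1 truncation error bound, c depending only on y (uniform in K)\<close>
    and l1_bound: "\<forall>K::nat. K \<ge> 1 \<longrightarrow> (\<forall>x\<in>{0..L}. \<forall>p\<in>{1..K}.
          \<bar>l1_resid \<gamma> T K y x p\<bar> \<le> c * (T / real K) powr (2 - \<gamma>))"
  shows "\<exists>C. \<forall>K::nat. \<forall>ys Ds. K \<ge> 1 \<and> discrete_solution L T \<gamma> \<alpha> u v0 K ys Ds \<longrightarrow>
           (\<forall>p\<in>{1..K}.
              norm2 L (Gamma (2 - \<gamma>) * (T / real K) powr \<gamma>) \<alpha>
                (\<lambda>x. y x (real p * (T / real K)) - ys p x)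
                (\<lambda>x. dxk 2 y (real p * (T / real K)) x - Ds p 2 x)
              \<le> C * T powr \<gamma> * (T / real K) powr (2 - \<gamma>))"
proof -
  have L0: "L \<ge> 0" using L_pos by simp
  have c0: "c \<ge> 0"
  proof -
    have "\<forall>x\<in>{0..L}. \<forall>p\<in>{1..1::nat}. \<bar>l1_resid \<gamma> T 1 y x p\<bar> \<le> c * (T / real (1::nat)) powr (2 - \<gamma>)"
      using l1_bound by blast
    then have "\<bar>l1_resid \<gamma> T 1 y 0 1\<bar> \<le> c * (T / real (1::nat)) powr (2 - \<gamma>)" using L0 by auto
    then have "0 \<le> c * T powr (2 - \<gamma>)" by simp
    moreover have "T powr (2 - \<gamma>) > 0" using T_pos by simp
    ultimately show ?thesis by (simp add: zero_le_mult_iff)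
  qed
  have Gpos: "Gamma (2 - \<gamma>) > 0" using gam by (intro Gamma_real_pos) simp
  define C where "C = Gamma (2 - \<gamma>) * sqrt L * c / (1 - \<gamma>)"
  show ?thesis
  proof (rule exI[of _ C], intro allI impI ballI)
    fix K :: nat and ys :: "nat \<Rightarrow> real \<Rightarrow> real" and Ds :: "nat \<Rightarrow> nat \<Rightarrow> real \<Rightarrow> real" and q :: nat
    assume H: "1 \<le> K \<and> discrete_solution L T \<gamma> \<alpha> u v0 K ys Ds" and q: "q \<in> {1..K}"
    define dt where "dt = T / real K"
    define \<beta> where "\<beta> = Gamma (2 - \<gamma>) * dt powr \<gamma>"
    define b where "b = bcoef \<gamma>"
    define E where "E i = norm2 L \<beta> \<alpha> (\<lambda>x. y x (real i * dt) - ys i x) (\<lambda>x. dxk 2 y (real i * dt) x - Ds i 2 x)" for i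
    define M where "M = \<beta> * (c * dt powr (2 - \<gamma>)) * sqrt L"
    have K1: "K \<ge> 1" using H by simp
    have dt0: "dt > 0" using K1 T_pos by (simp add: dt_def)
    have \<beta>0: "\<beta> > 0" using Gpos dt0 by (simp add: \<beta>_def)
    have M0: "M \<ge> 0" using \<beta>0 c0 L0 by (simp add: M_def)
    have DS: "(\<forall>x\<in>{0..L}. ys 0 x = v0 x) \<and>
      (\<forall>p\<in>{1..K}. H4 L (ys p) (Ds p) \<and> ys p 0 = 0 \<and> ys p L = 0 \<and> Ds p 2 0 = 0 \<and> Ds p 2 L = 0) \<and>
      (\<exists>N. negligible N \<and> (\<forall>x\<in>{0..L} - N. ys 1 x + \<beta> * \<alpha> * Ds 1 4 x = ys 0 x + \<beta> * u x dt)) \<and>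
      (\<forall>p\<in>{1..K - 1}. \<exists>N. negligible N \<and> (\<forall>x\<in>{0..L} - N.
          ys (p + 1) x + \<beta> * \<alpha> * Ds (p + 1) 4 x =
            (1 - bcoef \<gamma> 1) * ys p x
            + (\<Sum>j\<in>{1..p - 1}. (bcoef \<gamma> j - bcoef \<gamma> (j + 1)) * ys (p - j) x)
            + bcoef \<gamma> p * ys 0 x + \<beta> * u x (real (p + 1) * dt)))"
      using H unfolding discrete_solution_def Let_def dt_def \<beta>_def by blast
    have DS0: "\<forall>x\<in>{0..L}. ys 0 x = v0 x" using DS by blast
    have DSH: "\<And>i. i \<in> {1..K} \<Longrightarrow> H4 L (ys i) (Ds i) \<and> ys i 0 = 0 \<and> ys i L = 0 \<and> Ds i 2 0 = 0 \<and> Ds i 2 L = 0"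
      using DS by blast
    have DS1: "\<exists>N. negligible N \<and> (\<forall>x\<in>{0..L} - N. ys 1 x + \<beta> * \<alpha> * Ds 1 4 x = ys 0 x + \<beta> * u x dt)"
      using DS by blast
    have DSp: "\<And>p. p \<in> {1..K - 1} \<Longrightarrow> \<exists>N. negligible N \<and> (\<forall>x\<in>{0..L} - N.
          ys (p + 1) x + \<beta> * \<alpha> * Ds (p + 1) 4 x =
            (1 - bcoef \<gamma> 1) * ys p x
            + (\<Sum>j\<in>{1..p - 1}. (bcoef \<gamma> j - bcoef \<gamma> (j + 1)) * ys (p - j) x)
            + bcoef \<gamma> p * ys 0 x + \<beta> * u x (real (p + 1) * dt))"
      using DS by blast
    have tin: "real i * dt \<in> {0..T}" if "i \<le> K" for i
    proof -
      have "real i * dt \<le> real K * dt" using that dt0 by (simp add: mult_right_mono)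
      also have "real K * dt = T" using K1 by (simp add: dt_def)
      finally show ?thesis using dt0 by simp
    qed
    have dxk0: "dxk 0 y t = (\<lambda>x. y x t)" for t by (simp add: dxk_def)
    have ycont: "continuous_on UNIV (\<lambda>x. y x t)" if "t \<in> {0..T}" for t
    proof -
      have A: "\<forall>k<4. \<forall>x. (dxk k y t has_real_derivative dxk (Suc k) y t x) (at x)" using y_xsmooth that by blast
      have "\<forall>x. (dxk 0 y t has_real_derivative dxk (Suc 0) y t x) (at x)" using A[rule_format, of 0] by simp
      then have "continuous_on UNIV (dxk 0 y t)"
        by (intro DERIV_continuous_on[where D="dxk (Suc 0) y t"]) (auto intro: has_field_derivative_at_within)
      then show ?thesis by (simp add: dxk0)
    qed
    have econt: "continuous_on {0..L} (\<lambda>x. y x (real i * dt) - ys i x)" if i: "i \<in> {1..K}" for i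
    proof -
      have Hi: "H4 L (ys i) (Ds i)" using DSH[OF i] by blast
      have "continuous_on {0..L} (Ds i 0)" using chain_facts(4)[OF H4_rep[OF Hi] H4_abs[OF Hi]] .
      then have "continuous_on {0..L} (ys i)"
        by (rule continuous_on_eq) (use Hi in \<open>unfold H4_def, blast\<close>)
      moreover have "continuous_on {0..L} (\<lambda>x. y x (real i * dt))"
        using ycont[OF tin] i by (auto intro: continuous_on_subset)
      ultimately show ?thesis by (intro continuous_intros)
    qed
    have Estep: "E (p + 1) \<le> (\<Sum>j<p. (b j - b (j + 1)) * E (p - j)) + M" if pK: "p + 1 \<le> K" for p
    proof -
      define tq where "tq = real (p + 1) * dt"
      have tq: "tq \<in> {0..T}" unfolding tq_def by (rule tin[OF pK])
      have qi: "p + 1 \<in> {1..K}" using pK by simp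
      have Hq: "H4 L (ys (p + 1)) (Ds (p + 1))" and bcq: "ys (p + 1) 0 = 0" "ys (p + 1) L = 0"
          "Ds (p + 1) 2 0 = 0" "Ds (p + 1) 2 L = 0" using DSH[OF qi] by blast+
      define f where "f = (\<lambda>k x. dxk k y tq x - Ds (p + 1) k x)"
      have dY: "\<forall>k<4. \<forall>x. ((\<lambda>k. dxk k y tq) k has_real_derivative (\<lambda>k. dxk k y tq) (Suc k) x) (at x)"
        using y_xsmooth tq by blast
      have c4: "continuous_on UNIV ((\<lambda>k. dxk k y tq) 4)" using y_x4cont tq by blast
      note er = err_rep[OF dY c4 Hq]
      have rep: "\<forall>k<4. \<forall>x\<in>{0..L}. f k x = f k 0 + integral {0..x} (f (Suc k))"
        unfolding f_def by (rule er(1))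
      have f4: "f 4 absolutely_integrable_on {0..L}" unfolding f_def by (rule er(2))
      have Ds0: "\<forall>x\<in>{0..L}. Ds (p + 1) 0 x = ys (p + 1) x" using Hq unfolding H4_def by blast
      have f0: "f 0 x = y x tq - ys (p + 1) x" if "x \<in> {0..L}" for x
        using Ds0 that by (simp add: f_def dxk0)
      have yb: "y 0 tq = 0 \<and> y L tq = 0 \<and> dxk 2 y tq 0 = 0 \<and> dxk 2 y tq L = 0" using bc tq by blast
      have bc: "f 0 0 = 0" "f 0 L = 0" "f 2 0 = 0" "f 2 L = 0"
        using f0[of 0] f0[of L] L0 yb bcq by (simp_all add: f_def)
      obtain N where N: "negligible N" and eqDS: "\<forall>x\<in>{0..L} - N. ys (p + 1) x + \<beta> * \<alpha> * Ds (p + 1) 4 x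
          = (\<Sum>j<p. (b j - b (j + 1)) * ys (p - j) x) + b p * ys 0 x + \<beta> * u x tq"
      proof (cases "p = 0")
        case True
        obtain N where "negligible N" "\<forall>x\<in>{0..L} - N. ys 1 x + \<beta> * \<alpha> * Ds 1 4 x = ys 0 x + \<beta> * u x dt"
          using DS1 by blast
        then show ?thesis using that[of N] True by (simp add: tq_def b_def b0)
      next
        case False
        then have pp: "p \<in> {1..K - 1}" using pK by auto
        obtain N where N: "negligible N" and e: "\<forall>x\<in>{0..L} - N.
          ys (p + 1) x + \<beta> * \<alpha> * Ds (p + 1) 4 x =
            (1 - bcoef \<gamma> 1) * ys p x
            + (\<Sum>j\<in>{1..p - 1}. (bcoef \<gamma> j - bcoef \<gamma> (j + 1)) * ys (p - j) x)
            + bcoef \<gamma> p * ys 0 x + \<beta> * u x (real (p + 1) * dt)"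
          using DSp[OF pp] by blast
        have "p \<ge> 1" using False by simp
        then have sp: "(\<Sum>j<p. (bcoef \<gamma> j - bcoef \<gamma> (j + 1)) * ys (p - j) x) = (1 - bcoef \<gamma> 1) * ys p x
            + (\<Sum>j\<in>{1..p - 1}. (bcoef \<gamma> j - bcoef \<gamma> (j + 1)) * ys (p - j) x)" for x
          using split_sum[of p "\<lambda>j. (bcoef \<gamma> j - bcoef \<gamma> (j + 1)) * ys (p - j) x"] by (simp add: b0)
        show ?thesis
        proof (rule that[OF N], intro ballI)
          fix x assume x: "x \<in> {0..L} - N"
          have "ys (p + 1) x + \<beta> * \<alpha> * Ds (p + 1) 4 x =
            (1 - bcoef \<gamma> 1) * ys p x
            + (\<Sum>j\<in>{1..p - 1}. (bcoef \<gamma> j - bcoef \<gamma> (j + 1)) * ys (p - j) x)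
            + bcoef \<gamma> p * ys 0 x + \<beta> * u x (real (p + 1) * dt)" using e x by blast
          then show "ys (p + 1) x + \<beta> * \<alpha> * Ds (p + 1) 4 x
          = (\<Sum>j<p. (b j - b (j + 1)) * ys (p - j) x) + b p * ys 0 x + \<beta> * u x tq"
            unfolding b_def tq_def sp .
        qed
      qed
      have Rb: "\<forall>x\<in>{0..L} - N. \<bar>f 0 x + (\<beta> * \<alpha>) * f 4 x - (\<Sum>j\<in>{..<p}. (b j - b (j + 1)) * (\<lambda>j x. y x (real (p - j) * dt) - ys (p - j) x) j x)\<bar> \<le> \<beta> * (c * dt powr (2 - \<gamma>))"
      proof
        fix x assume x: "x \<in> {0..L} - N"
        then have x0: "x \<in> {0..L}" by simp
        define l where "l = l1_resid \<gamma> T K y x (p + 1)"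
        have lb: "\<bar>l\<bar> \<le> c * dt powr (2 - \<gamma>)"
          using l1_bound K1 x0 qi by (auto simp: l_def dt_def)
        have pde_x: "caputo \<gamma> y x tq + \<alpha> * dxk 4 y tq x = u x tq" using pde x0 tq by blast
        have ldef: "l = caputo \<gamma> y x tq - (1 / Gamma (2 - \<gamma>)) *
            (\<Sum>j<p + 1. b j * (y x (real (p + 1 - j) * dt) - y x (real (p + 1 - j - 1) * dt)) / dt powr \<gamma>)"
          by (simp add: l_def l1_resid_def tq_def dt_def b_def)
        have ex: "\<beta> * u x tq = (\<Sum>j<p + 1. b j * (y x (real (p + 1 - j) * dt) - y x (real (p + 1 - j - 1) * dt))) + \<beta> * l + (\<beta> * \<alpha>) * dxk 4 y tq x"
        proof -
          define S where "S = (\<Sum>j<p + 1. b j * (y x (real (p + 1 - j) * dt) - y x (real (p + 1 - j - 1) * dt)))"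
          have "(\<Sum>j<p + 1. b j * (y x (real (p + 1 - j) * dt) - y x (real (p + 1 - j - 1) * dt)) / dt powr \<gamma>) = S / dt powr \<gamma>"
            unfolding S_def by (rule sum_divide_distrib[symmetric])
          then have "caputo \<gamma> y x tq = l + S / (Gamma (2 - \<gamma>) * dt powr \<gamma>)" using ldef by simp
          then have "\<beta> * caputo \<gamma> y x tq = \<beta> * l + S" using Gpos dt0 by (simp add: \<beta>_def field_simps)
          then show ?thesis using pde_x[symmetric] by (simp add: S_def algebra_simps)
        qed
        have y0: "y x (real 0 * dt) = ys 0 x" using init DS0 x0 by simp
        have A: "(y x (real (p + 1) * dt) - ys (p + 1) x) + (\<beta> * \<alpha>) * (dxk 4 y tq x - Ds (p + 1) 4 x)
            - (\<Sum>j<p. (b j - b (j + 1)) * (y x (real (p - j) * dt) - ys (p - j) x)) = - (\<beta> * l)"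
          by (rule alg_step[where Y="\<lambda>i. y x (real i * dt)" and y="\<lambda>i. ys i x" and b=b, OF _ _ ex y0])
             (use eqDS x in \<open>simp_all add: b_def b0 tq_def\<close>)
        have "f 0 x + (\<beta> * \<alpha>) * f 4 x - (\<Sum>j\<in>{..<p}. (b j - b (j + 1)) * (\<lambda>j x. y x (real (p - j) * dt) - ys (p - j) x) j x) = - (\<beta> * l)"
          using A f0[OF x0] by (simp add: f_def tq_def)
        then show "\<bar>f 0 x + (\<beta> * \<alpha>) * f 4 x - (\<Sum>j\<in>{..<p}. (b j - b (j + 1)) * (\<lambda>j x. y x (real (p - j) * dt) - ys (p - j) x) j x)\<bar> \<le> \<beta> * (c * dt powr (2 - \<gamma>))"
          using lb \<beta>0 by (simp add: abs_mult mult_left_mono)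
      qed
      have wnn: "\<forall>j\<in>{..<p}. b j - b (j + 1) \<ge> 0" using b_mono[OF gam] by (simp add: b_def)
      have gc: "\<forall>j\<in>{..<p}. continuous_on {0..L} ((\<lambda>j x. y x (real (p - j) * dt) - ys (p - j) x) j)"
      proof
        fix j assume "j \<in> {..<p}"
        then have "p - j \<in> {1..K}" using pK by auto
        then show "continuous_on {0..L} ((\<lambda>j x. y x (real (p - j) * dt) - ys (p - j) x) j)" by (rule econt)
      qed
      have Gb: "\<forall>j\<in>{..<p}. norm0 L ((\<lambda>j x. y x (real (p - j) * dt) - ys (p - j) x) j) \<le> (\<lambda>j. E (p - j)) j"
        using norm0_le_norm2[of \<beta> \<alpha>] \<beta>0 alpha_pos by (simp add: E_def)
      have m0: "\<beta> * (c * dt powr (2 - \<gamma>)) \<ge> 0" using \<beta>0 c0 by simp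
      have lam0: "\<beta> * \<alpha> \<ge> 0" using \<beta>0 alpha_pos by simp
      have main: "sqrt ((norm0 L (f 0))\<^sup>2 + (\<beta> * \<alpha>) * (norm0 L (f 2))\<^sup>2)
          \<le> (\<Sum>j\<in>{..<p}. (b j - b (j + 1)) * (\<lambda>j. E (p - j)) j) + \<beta> * (c * dt powr (2 - \<gamma>)) * sqrt L"
        by (rule energy_step[OF L0 m0 lam0 rep f4 bc N Rb _ wnn gc Gb]) simp
      have n0: "norm0 L (f 0) = norm0 L (\<lambda>x. y x (real (p + 1) * dt) - ys (p + 1) x)"
      proof -
        have "integral {0..L} (\<lambda>x. (f 0 x)\<^sup>2) = integral {0..L} (\<lambda>x. (y x (real (p + 1) * dt) - ys (p + 1) x)\<^sup>2)"
          by (rule integral_cong) (simp add: f0 tq_def)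
        then show ?thesis unfolding norm0_def by simp
      qed
      have n2: "f 2 = (\<lambda>x. dxk 2 y (real (p + 1) * dt) x - Ds (p + 1) 2 x)" by (simp add: f_def tq_def)
      have "E (p + 1) = sqrt ((norm0 L (f 0))\<^sup>2 + (\<beta> * \<alpha>) * (norm0 L (f 2))\<^sup>2)"
        unfolding E_def norm2_def n0 n2 by simp
      then show ?thesis using main by (simp add: M_def)
    qed
    have bpos: "\<And>j. b j > 0" using b_pos[OF gam] by (simp add: b_def)
    have bmono: "\<And>j. b (Suc j) \<le> b j" using b_mono[OF gam] by (simp add: b_def)
    have Eq: "E q \<le> M / b (q - 1)"
      by (rule disc_gronwall2[OF M0 _ bpos bmono Estep]) (use q in \<open>auto simp: b_def b0\<close>)
    have qT: "real q * dt \<le> T" using tin[of q] q by simp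
    have bq: "(1 - \<gamma>) * real q powr (- \<gamma>) \<le> b (q - 1)" using b_lower[OF gam] q by (simp add: b_def)
    have "M / b (q - 1) \<le> C * T powr \<gamma> * dt powr (2 - \<gamma>)"
      unfolding M_def \<beta>_def C_def
      by (rule final_bound[OF gam dt0 c0 L0 Gpos _ qT bq]) (use q in simp)
    with Eq have "E q \<le> C * T powr \<gamma> * dt powr (2 - \<gamma>)" by simp
    then show "norm2 L (Gamma (2 - \<gamma>) * (T / real K) powr \<gamma>) \<alpha>
                (\<lambda>x. y x (real q * (T / real K)) - ys q x)
                (\<lambda>x. dxk 2 y (real q * (T / real K)) x - Ds q 2 x)
              \<le> C * T powr \<gamma> * (T / real K) powr (2 - \<gamma>)"
      by (simp add: E_def \<beta>_def dt_def)
  qed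
qed

end
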